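(* For $N\ge 5$, let $\mathrm{Cir}^4_N$ be the graph on vertices $1,\dots,N$ arranged in a cycle, in which each vertex is adjacent to the 2 nearest vertices clockwise and the 2 nearest counter-clockwise, and let $\mathrm{Cir}^2_N$ be the cycle graph on the same vertices in the same cyclic order. Then \[ 0.138<\liminf_{N\to\infty}\rho(\mathrm{Cir}^4_N,\mathrm{Cir}^2_N)\le\limsup_{N\to\infty}\rho(\mathrm{Cir}^4_N,\mathrm{Cir}^2_N)<0.34. \]
   Context: Moran Birth-death process on two graphs (neutral case): $G^A$ and $G^B$ are connected undirected simple graphs on the same vertex set $\{1,\dots,N\}$. Every vertex is occupied by exactly one individual, of type $A$ (mutant) or type $B$ (resident). In each discrete time step, one individual is chosen uniformly at random among all $N$ individuals to reproduce; its offspring (of the same type) replaces the individual at a vertex chosen uniformly at random among the neighbors of the parent's vertex, where neighbors are taken in $G^A$ if the parent is of type $A$ and in $G^B$ if the parent is of type $B$. The all-$A$ and all-$B$ states are absorbing. The fixation probability $\rho(G^A,G^B)$ is the probability that the process reaches the all-$A$ state when started from exactly one type-$A$ individual at a uniformly random vertex, all other vertices of type $B$. *)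

theory Defs
  imports "HOL-Probability.Probability" "HOL-Library.Liminf_Limsup"
begin

text \<open>Graphs on the vertex set {0..<N} (the paper's vertices 1..N, relabelled),
given by a symmetric irreflexive adjacency relation.\<close>

definition nbrs :: "nat \<Rightarrow> (nat \<Rightarrow> nat \<Rightarrow> bool) \<Rightarrow> nat \<Rightarrow> nat set" where
  "nbrs N E u = {w. w < N \<and> E u w}"

text \<open>One step of the neutral Moran Birth-death process on the pair (G^A, G^B).
A state is the set of vertices occupied by type A (mutants).\<close>

definition moran_step ::
  "nat \<Rightarrow> (nat \<Rightarrow> nat \<Rightarrow> bool) \<Rightarrow> (nat \<Rightarrow> nat \<Rightarrow> bool) \<Rightarrow> nat set \<Rightarrow> nat set pmf" where
  "moran_step N EA EB S =
     bind_pmf (pmf_of_set {..<N}) (\<lambda>u.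
       if u \<in> S then map_pmf (\<lambda>w. insert w S) (pmf_of_set (nbrs N EA u))
       else map_pmf (\<lambda>w. S - {w}) (pmf_of_set (nbrs N EB u)))"

definition moran_dist ::
  "nat \<Rightarrow> (nat \<Rightarrow> nat \<Rightarrow> bool) \<Rightarrow> (nat \<Rightarrow> nat \<Rightarrow> bool) \<Rightarrow> nat \<Rightarrow> nat set \<Rightarrow> nat set pmf" where
  "moran_dist N EA EB n S0 = ((\<lambda>p. bind_pmf p (moran_step N EA EB)) ^^ n) (return_pmf S0)"

text \<open>Probability of ever reaching the all-A state (absorbing), i.e. the supremum
over n of the probability of being in the all-A state at time n.\<close>

definition fixation_prob_from ::
  "nat \<Rightarrow> (nat \<Rightarrow> nat \<Rightarrow> bool) \<Rightarrow> (nat \<Rightarrow> nat \<Rightarrow> bool) \<Rightarrow> nat set \<Rightarrow> real" where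
  "fixation_prob_from N EA EB S0 = (SUP n. pmf (moran_dist N EA EB n S0) {..<N})"

text \<open>rho(G^A, G^B): start from a single mutant at a uniformly random vertex.\<close>

definition fixation_prob ::
  "nat \<Rightarrow> (nat \<Rightarrow> nat \<Rightarrow> bool) \<Rightarrow> (nat \<Rightarrow> nat \<Rightarrow> bool) \<Rightarrow> real" where
  "fixation_prob N EA EB = (\<Sum>v<N. fixation_prob_from N EA EB {v}) / real N"

text \<open>Circulant graph Cir^k_N on {0..<N} in cyclic order: u, v adjacent iff
they are distinct and at cyclic distance at most k/2.\<close>

definition cir :: "nat \<Rightarrow> nat \<Rightarrow> nat \<Rightarrow> nat \<Rightarrow> bool" where
  "cir N k u v = (u \<noteq> v \<and>
     (let d = (int u - int v) mod int N in d \<le> int (k div 2) \<or> int N - d \<le> int (k div 2)))"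

end

theory Submission imports Defs begin

definition pos :: "nat \<Rightarrow> int \<Rightarrow> nat" where "pos N i = nat (i mod int N)"
definition xb :: "nat \<Rightarrow> nat set \<Rightarrow> int \<Rightarrow> bool" where "xb N S i = (pos N i \<in> S)"
definition flip :: "nat set \<Rightarrow> nat \<Rightarrow> nat set" where
  "flip S j = (if j \<in> S then S - {j} else insert j S)"

lemma mod_small_cases:
  fixes a n :: int
  assumes "n > 0" "-n \<le> a" "a < 2*n"
  shows "a mod n = (if a < 0 then a + n else if a \<ge> n then a - n else a)"
proof -
  consider "a < 0" | "0 \<le> a" "a < n" | "n \<le> a" by linarith
  then show ?thesis
  proof cases
    case 1
    have "a mod n = (a + n) mod n" by simp
    also have "\<dots> = a + n" using 1 assms by (intro mod_pos_pos_trivial) auto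
    finally show ?thesis using 1 by simp
  next
    case 2 then show ?thesis by (simp add: mod_pos_pos_trivial)
  next
    case 3
    have "a mod n = (a - n) mod n" by simp
    also have "\<dots> = a - n" using 3 assms by (intro mod_pos_pos_trivial) auto
    finally show ?thesis using 3 assms by simp
  qed
qed

lemma int_pos: "N > 0 \<Longrightarrow> int (pos N i) = i mod int N"
  unfolding pos_def by simp

lemma pos_lt: "N > 0 \<Longrightarrow> pos N i < N"
  unfolding pos_def by (simp add: nat_less_iff)

lemma pos_of_nat: "j < N \<Longrightarrow> pos N (int j) = j"
  unfolding pos_def by (simp add: mod_pos_pos_trivial)

lemma pos_val:
  assumes "N \<ge> 5" "j < N" "-2 \<le> d" "d \<le> 2"
  shows "int (pos N (int j + d)) = (if int j + d < 0 then int j + d + int N else if int j + d \<ge> int N then int j + d - int N else int j + d)"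
  using assms by (simp add: int_pos mod_small_cases)

lemma pos_eq_iff:
  assumes "N \<ge> 5" "u < N" "j < N" "-2 \<le> d" "d \<le> 2"
  shows "u = pos N (int j + d) \<longleftrightarrow> int u = (if int j + d < 0 then int j + d + int N else if int j + d \<ge> int N then int j + d - int N else int j + d)"
  using pos_val[OF assms(1,3,4,5)] by (metis of_nat_eq_iff)

lemma pos_inj:
  assumes "N \<ge> 5" "j < N" "-2 \<le> a" "a \<le> 2" "-2 \<le> b" "b \<le> 2" "pos N (int j + a) = pos N (int j + b)"
  shows "a = b"
proof -
  have "int (pos N (int j + a)) = int (pos N (int j + b))" using assms(7) by simp
  then show ?thesis
  using pos_val[OF assms(1,2,3,4)] pos_val[OF assms(1,2,5,6)] assms(1-6)
  by (auto split: if_split_asm)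
qed

lemma cir_d:
  assumes "N \<ge> 5" "u < N" "j < N"
  shows "(int u - int j) mod int N = (if u \<ge> j then int u - int j else int u - int j + int N)"
  using assms by (intro trans[OF mod_small_cases]) auto

lemma cir_sym:
  assumes "N \<ge> 5" "u < N" "j < N"
  shows "cir N k u j = cir N k j u"
  unfolding cir_def Let_def cir_d[OF assms] cir_d[OF assms(1,3,2)]
  using assms by auto

lemma cir4_iff:
  assumes "N \<ge> 5" "u < N" "j < N"
  shows "cir N 4 u j \<longleftrightarrow> (u = pos N (int j + -2) \<or> u = pos N (int j + -1) \<or> u = pos N (int j + 1) \<or> u = pos N (int j + 2))"
proof -
  have e: "cir N 4 u j \<longleftrightarrow> u \<noteq> j \<and> (let d = (if u \<ge> j then int u - int j else int u - int j + int N) in d \<le> 2 \<or> int N - d \<le> 2)"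
    unfolding cir_def cir_d[OF assms] by simp
  have a: "u = pos N (int j + -1) \<longleftrightarrow> int u = (if int j + -1 < 0 then int j + -1 + int N else int j + -1)"
    using pos_eq_iff[OF assms, of "-1"] assms by simp
  have a2: "u = pos N (int j + -2) \<longleftrightarrow> int u = (if int j + -2 < 0 then int j + -2 + int N else int j + -2)"
    using pos_eq_iff[OF assms, of "-2"] assms by simp
  have b: "u = pos N (int j + 1) \<longleftrightarrow> int u = (if int j + 1 \<ge> int N then int j + 1 - int N else int j + 1)"
    using pos_eq_iff[OF assms, of "1"] assms by simp
  have b2: "u = pos N (int j + 2) \<longleftrightarrow> int u = (if int j + 2 \<ge> int N then int j + 2 - int N else int j + 2)"
    using pos_eq_iff[OF assms, of "2"] assms by simp
  show ?thesis unfolding e Let_def a b a2 b2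
    using assms by auto
qed

lemma cir2_iff:
  assumes "N \<ge> 5" "u < N" "j < N"
  shows "cir N 2 u j \<longleftrightarrow> (u = pos N (int j + -1) \<or> u = pos N (int j + 1))"
proof -
  have e: "cir N 2 u j \<longleftrightarrow> u \<noteq> j \<and> (let d = (if u \<ge> j then int u - int j else int u - int j + int N) in d \<le> 1 \<or> int N - d \<le> 1)"
    unfolding cir_def cir_d[OF assms] by simp
  have a: "u = pos N (int j + -1) \<longleftrightarrow> int u = (if int j + -1 < 0 then int j + -1 + int N else int j + -1)"
    using pos_eq_iff[OF assms, of "-1"] assms by simp
  have b: "u = pos N (int j + 1) \<longleftrightarrow> int u = (if int j + 1 \<ge> int N then int j + 1 - int N else int j + 1)"
    using pos_eq_iff[OF assms, of "1"] assms by simp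
  show ?thesis unfolding e Let_def a b
    using assms by auto
qed

lemma set4:
  assumes "N \<ge> 5" "j < N"
  shows "{u \<in> {..<N}. cir N 4 u j} = {pos N (int j + -2), pos N (int j + -1), pos N (int j + 1), pos N (int j + 2)}"
  using cir4_iff[OF assms(1) _ assms(2)] pos_lt[of N] assms by auto

lemma set2:
  assumes "N \<ge> 5" "j < N"
  shows "{u \<in> {..<N}. cir N 2 u j} = {pos N (int j + -1), pos N (int j + 1)}"
  using cir2_iff[OF assms(1) _ assms(2)] pos_lt[of N] assms by auto

lemma nbrs4:
  assumes "N \<ge> 5" "j < N"
  shows "nbrs N (cir N 4) j = {pos N (int j + -2), pos N (int j + -1), pos N (int j + 1), pos N (int j + 2)}"
proof -
  have "nbrs N (cir N 4) j = {u \<in> {..<N}. cir N 4 u j}"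
    unfolding nbrs_def using cir_sym[OF assms(1) _ assms(2)] by auto
  then show ?thesis using set4[OF assms] by simp
qed

lemma nbrs2:
  assumes "N \<ge> 5" "j < N"
  shows "nbrs N (cir N 2) j = {pos N (int j + -1), pos N (int j + 1)}"
proof -
  have "nbrs N (cir N 2) j = {u \<in> {..<N}. cir N 2 u j}"
    unfolding nbrs_def using cir_sym[OF assms(1) _ assms(2)] by auto
  then show ?thesis using set2[OF assms] by simp
qed

lemma distinct4:
  assumes "N \<ge> 5" "j < N"
  shows "pos N (int j + -2) \<noteq> pos N (int j + -1)" "pos N (int j + -2) \<noteq> pos N (int j + 1)"
        "pos N (int j + -2) \<noteq> pos N (int j + 2)" "pos N (int j + -1) \<noteq> pos N (int j + 1)"
        "pos N (int j + -1) \<noteq> pos N (int j + 2)" "pos N (int j + 1) \<noteq> pos N (int j + 2)"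
  using pos_inj[OF assms, of "-2" "-1"] pos_inj[OF assms, of "-2" "1"] pos_inj[OF assms, of "-2" "2"]
    pos_inj[OF assms, of "-1" "1"] pos_inj[OF assms, of "-1" "2"] pos_inj[OF assms, of "1" "2"]
  by auto

lemma card_nbrs4: "N \<ge> 5 \<Longrightarrow> j < N \<Longrightarrow> card (nbrs N (cir N 4) j) = 4"
  using distinct4 by (simp add: nbrs4)
lemma card_nbrs2: "N \<ge> 5 \<Longrightarrow> j < N \<Longrightarrow> card (nbrs N (cir N 2) j) = 2"
  using distinct4 by (simp add: nbrs2)


definition rate :: "nat \<Rightarrow> nat set \<Rightarrow> nat \<Rightarrow> real" where
  "rate N S j = (if j \<in> S then (of_bool (\<not> xb N S (int j + -1)) + of_bool (\<not> xb N S (int j + 1))) / 2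
     else (of_bool (xb N S (int j + -2)) + of_bool (xb N S (int j + -1)) + of_bool (xb N S (int j + 1)) + of_bool (xb N S (int j + 2))) / 4)"

lemma nbrs_filter: "nbrs N E u = {w \<in> {..<N}. E u w}"
  unfolding nbrs_def by auto

lemma sum_over4:
  assumes "N \<ge> 5" "j < N"
  shows "(\<Sum>u<N. if cir N 4 u j then g u else 0) =
    g (pos N (int j + -2)) + g (pos N (int j + -1)) + g (pos N (int j + 1)) + g (pos N (int j + 2))"
proof -
  have "(\<Sum>u<N. if cir N 4 u j then g u else 0) = sum g {u \<in> {..<N}. cir N 4 u j}"
    using sum.inter_filter[of "{..<N}" g "\<lambda>u. cir N 4 u j"] by simp
  also have "\<dots> = g (pos N (int j + -2)) + g (pos N (int j + -1)) + g (pos N (int j + 1)) + g (pos N (int j + 2))"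
    unfolding set4[OF assms] using distinct4[OF assms] by (simp add: algebra_simps)
  finally show ?thesis .
qed

lemma sum_over2:
  assumes "N \<ge> 5" "j < N"
  shows "(\<Sum>u<N. if cir N 2 u j then g u else 0) = g (pos N (int j + -1)) + g (pos N (int j + 1))"
proof -
  have "(\<Sum>u<N. if cir N 2 u j then g u else 0) = sum g {u \<in> {..<N}. cir N 2 u j}"
    using sum.inter_filter[of "{..<N}" g "\<lambda>u. cir N 2 u j"] by simp
  also have "\<dots> = g (pos N (int j + -1)) + g (pos N (int j + 1))"
    unfolding set2[OF assms] using distinct4[OF assms] by (simp add: algebra_simps)
  finally show ?thesis .
qed

lemma inner_eq:
  fixes f :: "nat set \<Rightarrow> real"
  assumes "N \<ge> 5" "u < N"
  shows "(if u \<in> S then (\<Sum>w\<in>nbrs N (cir N 4) u. f (insert w S)) / 4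
          else (\<Sum>w\<in>nbrs N (cir N 2) u. f (S - {w})) / 2)
       = f S + (\<Sum>w<N. (if cir N 4 u w \<and> u \<in> S then (f (insert w S) - f S) / 4 else 0)
                     + (if cir N 2 u w \<and> u \<notin> S then (f (S - {w}) - f S) / 2 else 0))"
proof (cases "u \<in> S")
  case True
  have "(\<Sum>w<N. (if cir N 4 u w \<and> u \<in> S then (f (insert w S) - f S) / 4 else 0)
                     + (if cir N 2 u w \<and> u \<notin> S then (f (S - {w}) - f S) / 2 else 0))
     = (\<Sum>w<N. if cir N 4 u w then (f (insert w S) - f S) / 4 else 0)"
    using True by (intro sum.cong) auto
  also have "\<dots> = (\<Sum>w\<in>nbrs N (cir N 4) u. (f (insert w S) - f S) / 4)"
    unfolding nbrs_filter by (rule sum.inter_filter[symmetric]) simp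
  also have "\<dots> = (\<Sum>w\<in>nbrs N (cir N 4) u. f (insert w S)) / 4 - f S"
    using card_nbrs4[OF assms] by (simp add: sum_subtractf sum_divide_distrib[symmetric])
  finally show ?thesis using True by simp
next
  case False
  have "(\<Sum>w<N. (if cir N 4 u w \<and> u \<in> S then (f (insert w S) - f S) / 4 else 0)
                     + (if cir N 2 u w \<and> u \<notin> S then (f (S - {w}) - f S) / 2 else 0))
     = (\<Sum>w<N. if cir N 2 u w then (f (S - {w}) - f S) / 2 else 0)"
    using False by (intro sum.cong) auto
  also have "\<dots> = (\<Sum>w\<in>nbrs N (cir N 2) u. (f (S - {w}) - f S) / 2)"
    unfolding nbrs_filter by (rule sum.inter_filter[symmetric]) simp
  also have "\<dots> = (\<Sum>w\<in>nbrs N (cir N 2) u. f (S - {w})) / 2 - f S"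
    using card_nbrs2[OF assms] by (simp add: sum_subtractf sum_divide_distrib[symmetric])
  finally show ?thesis using False by simp
qed

lemma if_ofb: "(if b then c else 0) = of_bool b * (c::real)" by simp

lemma col_eq:
  fixes f :: "nat set \<Rightarrow> real"
  assumes "N \<ge> 5" "w < N"
  shows "(\<Sum>u<N. (if cir N 4 u w \<and> u \<in> S then (f (insert w S) - f S) / 4 else 0)
                     + (if cir N 2 u w \<and> u \<notin> S then (f (S - {w}) - f S) / 2 else 0))
       = rate N S w * (f (flip S w) - f S)"
proof -
  have s1: "(\<Sum>u<N. (if cir N 4 u w \<and> u \<in> S then (f (insert w S) - f S) / 4 else 0))
      = (\<Sum>u<N. if cir N 4 u w then (if u \<in> S then (f (insert w S) - f S) / 4 else 0) else 0)"
    by (intro sum.cong) auto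
  have s2: "(\<Sum>u<N. (if cir N 2 u w \<and> u \<notin> S then (f (S - {w}) - f S) / 2 else 0))
      = (\<Sum>u<N. if cir N 2 u w then (if u \<notin> S then (f (S - {w}) - f S) / 2 else 0) else 0)"
    by (intro sum.cong) auto
  show ?thesis
  proof (cases "w \<in> S")
    case True
    then have e: "insert w S = S" "flip S w = S - {w}" by (auto simp: flip_def)
    show ?thesis unfolding sum.distrib s1 s2 sum_over4[OF assms] sum_over2[OF assms] unfolding e using True
      by (simp add: rate_def xb_def if_ofb algebra_simps add_divide_distrib)
  next
    case False
    then have e: "S - {w} = S" "flip S w = insert w S" by (auto simp: flip_def)
    show ?thesis unfolding sum.distrib s1 s2 sum_over4[OF assms] sum_over2[OF assms] unfolding e using False
      by (simp add: rate_def xb_def if_ofb algebra_simps add_divide_distrib)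
  qed
qed

lemma finite_nbrs[simp]: "finite (nbrs N E u)"
  unfolding nbrs_def by simp

lemma sum_const_plus: "(\<Sum>u\<in>A. (c::real) + g u) = real (card A) * c + sum g A"
  by (simp add: sum.distrib)

lemma step_exp:
  fixes f :: "nat set \<Rightarrow> real"
  assumes "N \<ge> 5"
  shows "measure_pmf.expectation (moran_step N (cir N 4) (cir N 2) S) f
     = f S + (\<Sum>j<N. rate N S j * (f (flip S j) - f S)) / real N"
proof -
  have ne4: "nbrs N (cir N 4) u \<noteq> {}" "finite (nbrs N (cir N 4) u)" if "u < N" for u
    using card_nbrs4[OF assms that] by (auto simp: card_gt_0_iff[symmetric])
  have ne2: "nbrs N (cir N 2) u \<noteq> {}" "finite (nbrs N (cir N 2) u)" if "u < N" for u
    using card_nbrs2[OF assms that] by (auto simp: card_gt_0_iff[symmetric])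
  have "0 \<in> {..<N}" using assms by simp
  then have N0: "{..<N} \<noteq> {}" by blast
  have "measure_pmf.expectation (moran_step N (cir N 4) (cir N 2) S) f
     = (\<Sum>u<N. measure_pmf.expectation (if u \<in> S then map_pmf (\<lambda>w. insert w S) (pmf_of_set (nbrs N (cir N 4) u))
       else map_pmf (\<lambda>w. S - {w}) (pmf_of_set (nbrs N (cir N 2) u))) f / real N)"
    unfolding moran_step_def
    by (subst pmf_expectation_bind_pmf_of_set) (use N0 ne4 ne2 in \<open>auto simp: divide_simps\<close>)
  also have "\<dots> = (\<Sum>u<N. (if u \<in> S then (\<Sum>w\<in>nbrs N (cir N 4) u. f (insert w S)) / 4
          else (\<Sum>w\<in>nbrs N (cir N 2) u. f (S - {w})) / 2) / real N)"
  proof (intro sum.cong refl)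
    fix u assume u: "u \<in> {..<N}"
    show "measure_pmf.expectation (if u \<in> S then map_pmf (\<lambda>w. insert w S) (pmf_of_set (nbrs N (cir N 4) u))
       else map_pmf (\<lambda>w. S - {w}) (pmf_of_set (nbrs N (cir N 2) u))) f / real N =
      (if u \<in> S then (\<Sum>w\<in>nbrs N (cir N 4) u. f (insert w S)) / 4
          else (\<Sum>w\<in>nbrs N (cir N 2) u. f (S - {w})) / 2) / real N"
    proof (cases "u \<in> S")
      case True
      then show ?thesis using ne4[of u] card_nbrs4[OF assms, of u] u
        by (simp add: integral_pmf_of_set[of "nbrs N (cir N 4) u"])
    next
      case False
      then show ?thesis using ne2[of u] card_nbrs2[OF assms, of u] u
        by (simp add: integral_pmf_of_set[of "nbrs N (cir N 2) u"])
    qed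
  qed
  also have "\<dots> = (\<Sum>u<N. (if u \<in> S then (\<Sum>w\<in>nbrs N (cir N 4) u. f (insert w S)) / 4
          else (\<Sum>w\<in>nbrs N (cir N 2) u. f (S - {w})) / 2)) / real N"
    by (simp only: sum_divide_distrib)
  also have "\<dots> = (\<Sum>u<N. f S + (\<Sum>w<N. (if cir N 4 u w \<and> u \<in> S then (f (insert w S) - f S) / 4 else 0)
                     + (if cir N 2 u w \<and> u \<notin> S then (f (S - {w}) - f S) / 2 else 0))) / real N"
    by (rule arg_cong[where f="\<lambda>x. x / real N"], rule sum.cong, rule refl, rule inner_eq[OF assms], simp)
  also have "\<dots> = (real N * f S + (\<Sum>w<N. \<Sum>u<N. (if cir N 4 u w \<and> u \<in> S then (f (insert w S) - f S) / 4 else 0)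
                     + (if cir N 2 u w \<and> u \<notin> S then (f (S - {w}) - f S) / 2 else 0))) / real N"
    apply (subst sum_const_plus)
    apply (subst sum.swap)
    apply simp
    done
  also have "\<dots> = (real N * f S + (\<Sum>w<N. rate N S w * (f (flip S w) - f S))) / real N"
    by (rule arg_cong[where f="\<lambda>x. (real N * f S + x) / real N"], rule sum.cong, rule refl, rule col_eq[OF assms], simp)
  also have "\<dots> = f S + (\<Sum>j<N. rate N S j * (f (flip S j) - f S)) / real N"
    using assms by (simp add: field_simps)
  finally show ?thesis .
qed

definition R :: "(bool \<Rightarrow> bool \<Rightarrow> bool \<Rightarrow> real) \<Rightarrow> bool \<Rightarrow> bool \<Rightarrow> bool \<Rightarrow> bool \<Rightarrow> bool \<Rightarrow> real" where
  "R w a b c d e = w a b (\<not> c) / w a b c * (w b (\<not> c) d / w b c d) * (w (\<not> c) d e / w c d e)"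
definition rt :: "bool \<Rightarrow> bool \<Rightarrow> bool \<Rightarrow> bool \<Rightarrow> bool \<Rightarrow> real" where
  "rt a b c d e = (if c then (of_bool (\<not> b) + of_bool (\<not> d)) / 2 else (of_bool a + of_bool b + of_bool d + of_bool e) / 4)"
definition tau :: "(bool \<Rightarrow> bool \<Rightarrow> bool \<Rightarrow> real) \<Rightarrow> bool \<Rightarrow> bool \<Rightarrow> bool \<Rightarrow> bool \<Rightarrow> bool \<Rightarrow> real" where
  "tau w a b c d e = rt a b c d e * (R w a b c d e - 1)"

definition wL :: "bool \<Rightarrow> bool \<Rightarrow> bool \<Rightarrow> real" where
  "wL a b c = (if a then (if b then (if c then 78/100 else 1) else (if c then 93/100 else 1))
     else (if b then (if c then 73/100 else 93/100) else (if c then 92/100 else 1)))"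
definition wU :: "bool \<Rightarrow> bool \<Rightarrow> bool \<Rightarrow> real" where
  "wU a b c = (if a then (if b then 6/10 else 1) else (if b then 7/10 else 1))"
definition wV :: "bool \<Rightarrow> bool \<Rightarrow> bool \<Rightarrow> real" where
  "wV a b c = (if a then 3 else 1)"

definition phiL :: "bool \<Rightarrow> bool \<Rightarrow> bool \<Rightarrow> bool \<Rightarrow> real" where
  "phiL a b c d = (if a then (if b then (if c then (if d then (11/78::real) else (11/78::real)) else (if d then (7/25::real) else (11/39::real))) else (if c then (if d then (0::real) else (67/1000::real)) else (if d then (7/50::real) else (671/3900::real)))) else (if b then (if c then (if d then (11/78::real) else (7/50::real)) else (if d then (53/250::real) else (9/40::real))) else (if c then (if d then (0::real) else (111/2000::real)) else (if d then (7836323/71760000::real) else (7/50::real)))))"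

definition phiU :: "bool \<Rightarrow> bool \<Rightarrow> bool \<Rightarrow> bool \<Rightarrow> real" where
  "phiU a b c d = (if a then (if b then (if c then (if d then (4/15::real) else (4/15::real)) else (if d then (0::real) else (0::real))) else (if c then (if d then (17/35::real) else (51/140::real)) else (if d then (3/10::real) else (1/5::real)))) else (if b then (if c then (if d then (4/15::real) else (4/15::real)) else (if d then (1/14::real) else (1/14::real))) else (if c then (if d then (3/5::real) else (1/2::real)) else (if d then (7/20::real) else (11/40::real)))))"

definition phiV :: "bool \<Rightarrow> bool \<Rightarrow> bool \<Rightarrow> bool \<Rightarrow> real" where
  "phiV a b c d = (if a then (if b then (if c then (if d then (1/3::real) else (1/3::real)) else (if d then (5/6::real) else (5/6::real))) else (if c then (if d then (0::real) else (0::real)) else (if d then (0::real) else (1/3::real)))) else (if b then (if c then (if d then (1/3::real) else (1/3::real)) else (if d then (5/6::real) else (5/6::real))) else (if c then (if d then (0::real) else (0::real)) else (if d then (0::real) else (0::real)))))"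

lemma checkL: "tau wL a b c d e \<le> phiL b c d e - phiL a b c d"
  by (cases a; cases b; cases c; cases d; cases e) (simp_all add: tau_def R_def rt_def wL_def phiL_def)

lemma checkU: "- tau wU a b c d e \<le> phiU b c d e - phiU a b c d"
  by (cases a; cases b; cases c; cases d; cases e) (simp_all add: tau_def R_def rt_def wU_def phiU_def)

lemma checkV: "of_bool (c \<noteq> d) / 6 - tau wV a b c d e \<le> phiV b c d e - phiV a b c d"
  by (cases a; cases b; cases c; cases d; cases e) (simp_all add: tau_def R_def rt_def wV_def phiV_def)

definition PF :: "(bool \<Rightarrow> bool \<Rightarrow> bool \<Rightarrow> real) \<Rightarrow> nat \<Rightarrow> nat set \<Rightarrow> real" where
  "PF w N S = (\<Prod>i<N. w (xb N S (int i)) (xb N S (int i + 1)) (xb N S (int i + 2)))"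

lemma xb_per: "N > 0 \<Longrightarrow> xb N S (int (pos N a) + k) = xb N S (a + k)"
  unfolding xb_def pos_def by (simp add: mod_add_left_eq)

lemma xb_shiftN: "xb N S (a + int N) = xb N S a"
  unfolding xb_def pos_def by simp

lemma xb_flip: "xb N (flip S j) i = (if pos N i = j then \<not> xb N S i else xb N S i)"
  unfolding xb_def flip_def by auto

lemma xb_nat: "j < N \<Longrightarrow> xb N S (int j) = (j \<in> S)"
  unfolding xb_def by (simp add: pos_of_nat)

lemma win_iff:
  assumes "i < N" "j < N"
  shows "pos N (int i + k) = j \<longleftrightarrow> i = pos N (int j - k)"
proof -
  have N: "N > 0" using assms by simp
  have "pos N (int i + k) = j \<longleftrightarrow> (int i + k) mod int N = int j"
    using int_pos[OF N, of "int i + k"] by (metis of_nat_eq_iff)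
  moreover have "i = pos N (int j - k) \<longleftrightarrow> int i = (int j - k) mod int N"
    using int_pos[OF N, of "int j - k"] by (metis of_nat_eq_iff)
  moreover have "(int i + k) mod int N = int j \<longleftrightarrow> int i = (int j - k) mod int N"
  proof
    assume h: "(int i + k) mod int N = int j"
    have "(int j - k) mod int N = ((int i + k) mod int N - k) mod int N" by (simp add: h)
    also have "\<dots> = int i" using assms by (simp add: mod_diff_left_eq mod_pos_pos_trivial)
    finally show "int i = (int j - k) mod int N" by simp
  next
    assume h: "int i = (int j - k) mod int N"
    have "(int i + k) mod int N = ((int j - k) mod int N + k) mod int N" by (simp add: h)
    also have "\<dots> = int j" using assms by (simp add: mod_add_left_eq mod_pos_pos_trivial)
    finally show "(int i + k) mod int N = int j" .
  qed
  ultimately show ?thesis by simp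
qed

lemma prod_change:
  fixes f f' :: "nat \<Rightarrow> real"
  assumes "finite A" "K \<subseteq> A" "\<And>i. i \<in> A - K \<Longrightarrow> f' i = f i" "\<And>i. i \<in> K \<Longrightarrow> f i \<noteq> 0"
  shows "prod f' A = prod f A * prod (\<lambda>i. f' i / f i) K"
proof -
  have fK: "finite K" using assms(1,2) finite_subset by blast
  have "prod f' A = prod f' (A - K) * prod f' K"
    using prod.subset_diff[OF assms(2,1)] by simp
  also have "prod f' (A - K) = prod f (A - K)" using assms(3) by (rule prod.cong[OF refl])
  also have "prod f' K = prod f K * prod (\<lambda>i. f' i / f i) K"
    unfolding prod.distrib[symmetric] using assms(4) by (intro prod.cong) auto
  also have "prod f (A - K) * (prod f K * prod (\<lambda>i. f' i / f i) K) = prod f A * prod (\<lambda>i. f' i / f i) K"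
    using prod.subset_diff[OF assms(2,1), of f] by simp
  finally show ?thesis .
qed

lemma pos_self: "N \<ge> 5 \<Longrightarrow> j < N \<Longrightarrow> -2 \<le> d \<Longrightarrow> d \<le> 2 \<Longrightarrow> pos N (int j + d) = j \<longleftrightarrow> d = 0"
  using pos_inj[of N j d 0] pos_of_nat[of j N] by auto

lemma PF_flip:
  assumes N: "N \<ge> 5" and j: "j < N" and wpos: "\<And>a b c. w a b c > 0"
  shows "PF w N (flip S j) = PF w N S *
     R w (xb N S (int j - 2)) (xb N S (int j - 1)) (xb N S (int j)) (xb N S (int j + 1)) (xb N S (int j + 2))"
proof -
  define x where "x = xb N S"
  define x' where "x' = xb N (flip S j)"
  define f where "f i = w (x (int i)) (x (int i + 1)) (x (int i + 2))" for i
  define f' where "f' i = w (x' (int i)) (x' (int i + 1)) (x' (int i + 2))" for i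
  define K where "K = {pos N (int j - 2), pos N (int j - 1), j}"
  have N0: "N > 0" using N by simp
  have p2: "pos N (int j - 2) \<noteq> j" using pos_self[OF N j, of "-2"] by simp
  have p1: "pos N (int j - 1) \<noteq> j" using pos_self[OF N j, of "-1"] by simp
  have pp1: "pos N (int j + 1) \<noteq> j" using pos_self[OF N j, of "1"] by simp
  have pp2: "pos N (int j + 2) \<noteq> j" using pos_self[OF N j, of "2"] by simp
  have p12: "pos N (int j - 2) \<noteq> pos N (int j - 1)" using distinct4(1)[OF N j] by simp
  have x'x: "x' i = (if pos N i = j then \<not> x i else x i)" for i
    unfolding x_def x'_def by (rule xb_flip)
  have KA: "K \<subseteq> {..<N}" unfolding K_def using pos_lt[OF N0] j by auto
  have same: "f' i = f i" if "i \<in> {..<N} - K" for i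
  proof -
    have i: "i < N" "i \<noteq> pos N (int j - 2)" "i \<noteq> pos N (int j - 1)" "i \<noteq> j" using that unfolding K_def by auto
    have "pos N (int i + k) \<noteq> j" if "k \<in> {0,1,2}" for k
      using win_iff[OF i(1) j, of k] i that pos_of_nat[OF j] by auto
    from this[of 0] this[of 1] this[of 2] show ?thesis
      unfolding f_def f'_def x'x by simp
  qed
  have fnz: "f i \<noteq> 0" for i unfolding f_def using wpos by (metis less_irrefl)
  have PFS: "PF w N S = prod f {..<N}" unfolding PF_def f_def x_def ..
  have PFS': "PF w N (flip S j) = prod f' {..<N}" unfolding PF_def f'_def x'_def ..
  have "prod f' {..<N} = prod f {..<N} * prod (\<lambda>i. f' i / f i) K"
    by (rule prod_change[OF _ KA same]) (simp_all add: fnz)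
  also have "prod (\<lambda>i. f' i / f i) K = f' (pos N (int j - 2)) / f (pos N (int j - 2))
       * (f' (pos N (int j - 1)) / f (pos N (int j - 1))) * (f' j / f j)"
    unfolding K_def using p2 p1 p12 by (simp add: mult.assoc)
  also have "\<dots> = R w (x (int j - 2)) (x (int j - 1)) (x (int j)) (x (int j + 1)) (x (int j + 2))"
  proof -
    have a: "x (int (pos N (int j - 2)) + k) = x (int j - 2 + k)"
         "x' (int (pos N (int j - 2)) + k) = x' (int j - 2 + k)"
         "x (int (pos N (int j - 1)) + k) = x (int j - 1 + k)"
         "x' (int (pos N (int j - 1)) + k) = x' (int j - 1 + k)" for k
      unfolding x_def x'_def using xb_per[OF N0] by auto
    have a0: "x (int (pos N (int j - 2))) = x (int j - 2)" "x' (int (pos N (int j - 2))) = x' (int j - 2)"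
         "x (int (pos N (int j - 1))) = x (int j - 1)" "x' (int (pos N (int j - 1))) = x' (int j - 1)"
         "pos N (int (pos N (int j - 2))) = pos N (int j - 2)" "pos N (int (pos N (int j - 1))) = pos N (int j - 1)"
      unfolding x_def x'_def using xb_per[OF N0, of _ _ 0] pos_of_nat[OF pos_lt[OF N0]] by auto
    have b: "pos N (int j - 2 + 1) \<noteq> j" "pos N (int j - 2 + 2) = j" "pos N (int j - 1 + 1) = j"
            "pos N (int j - 1 + 2) \<noteq> j" "pos N (int j + 2) \<noteq> j" "pos N (int j + 1) \<noteq> j" "pos N (int j) = j"
      using p1 pp1 pp2 pos_of_nat[OF j] by (simp_all add: algebra_simps)
    have c: "int j - 2 + 1 = int j - 1" "int j - 2 + 2 = int j" "int j - 1 + 1 = int j" "int j - 1 + 2 = int j + 1"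
      by simp_all
    show ?thesis
      unfolding f_def f'_def a a0
      using b p1 p2 unfolding c by (simp add: x'x R_def a0)
  qed
  finally show ?thesis unfolding PFS PFS' x_def .
qed

lemma rate_rt:
  assumes "j < N"
  shows "rate N S j = rt (xb N S (int j - 2)) (xb N S (int j - 1)) (xb N S (int j)) (xb N S (int j + 1)) (xb N S (int j + 2))"
  unfolding rate_def rt_def xb_nat[OF assms] by simp

lemma PF_drift:
  assumes N: "N \<ge> 5" and wpos: "\<And>a b c. w a b c > 0"
  shows "(\<Sum>j<N. rate N S j * (PF w N (flip S j) - PF w N S)) = PF w N S *
     (\<Sum>j<N. tau w (xb N S (int j - 2)) (xb N S (int j - 1)) (xb N S (int j)) (xb N S (int j + 1)) (xb N S (int j + 2)))"
  unfolding sum_distrib_left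
proof (rule sum.cong[OF refl])
  fix j assume "j \<in> {..<N}"
  then have j: "j < N" by simp
  show "rate N S j * (PF w N (flip S j) - PF w N S) = PF w N S *
     tau w (xb N S (int j - 2)) (xb N S (int j - 1)) (xb N S (int j)) (xb N S (int j + 1)) (xb N S (int j + 2))"
    unfolding PF_flip[OF N j wpos] rate_rt[OF j] tau_def by (simp add: algebra_simps)
qed

lemma telescope:
  fixes Fn :: "bool \<Rightarrow> bool \<Rightarrow> bool \<Rightarrow> bool \<Rightarrow> bool \<Rightarrow> real"
  assumes N: "N > 0" and H: "\<And>a b c d e. Fn a b c d e \<le> phi b c d e - phi a b c d"
  shows "(\<Sum>j<N. Fn (xb N S (int j - 2)) (xb N S (int j - 1)) (xb N S (int j)) (xb N S (int j + 1)) (xb N S (int j + 2))) \<le> 0"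
proof -
  define Psi where "Psi j = phi (xb N S (int j - 2)) (xb N S (int j - 1)) (xb N S (int j)) (xb N S (int j + 1))" for j
  have "(\<Sum>j<N. Fn (xb N S (int j - 2)) (xb N S (int j - 1)) (xb N S (int j)) (xb N S (int j + 1)) (xb N S (int j + 2)))
     \<le> (\<Sum>j<N. Psi (Suc j) - Psi j)"
  proof (rule sum_mono)
    fix j
    have e: "int (Suc j) - 2 = int j - 1" "int (Suc j) - 1 = int j" "int (Suc j) = int j + 1" "int (Suc j) + 1 = int j + 2"
      by simp_all
    have "Psi (Suc j) = phi (xb N S (int j - 1)) (xb N S (int j)) (xb N S (int j + 1)) (xb N S (int j + 2))"
      unfolding Psi_def by (simp add: algebra_simps)
    then show "Fn (xb N S (int j - 2)) (xb N S (int j - 1)) (xb N S (int j)) (xb N S (int j + 1)) (xb N S (int j + 2)) \<le> Psi (Suc j) - Psi j"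
      unfolding Psi_def using H by simp
  qed
  also have "\<dots> = Psi N - Psi 0" by (rule sum_lessThan_telescope)
  also have "Psi N = Psi 0"
  proof -
    have "xb N S (int N + k) = xb N S k" for k using xb_shiftN[of N S k] by (simp add: add.commute)
    from this[of "-2"] this[of "-1"] this[of 0] this[of 1] show ?thesis unfolding Psi_def by simp
  qed
  finally show ?thesis by simp
qed


abbreviation stp :: "nat \<Rightarrow> nat set \<Rightarrow> nat set pmf" where
  "stp N \<equiv> moran_step N (cir N 4) (cir N 2)"
abbreviation dst :: "nat \<Rightarrow> nat set \<Rightarrow> nat \<Rightarrow> nat set pmf" where
  "dst N S0 n \<equiv> moran_dist N (cir N 4) (cir N 2) n S0"

lemma set_stp:
  assumes N: "N \<ge> 5" and S: "S \<subseteq> {..<N}"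
  shows "set_pmf (stp N S) \<subseteq> Pow {..<N}"
proof -
  have ne4: "nbrs N (cir N 4) u \<noteq> {}" if "u < N" for u
    using card_nbrs4[OF N that] by auto
  have ne2: "nbrs N (cir N 2) u \<noteq> {}" if "u < N" for u
    using card_nbrs2[OF N that] by auto
  have sub: "nbrs N E u \<subseteq> {..<N}" for E u unfolding nbrs_def by auto
  show ?thesis
  proof
    fix T assume T: "T \<in> set_pmf (stp N S)"
    have "0 \<in> {..<N}" using N by simp
    then have ne0: "{..<N} \<noteq> {}" by blast
    have s0: "set_pmf (pmf_of_set {..<N}) = {..<N}" by (rule set_pmf_of_set[OF ne0]) simp
    from T obtain u where u: "u < N" and
      Tu: "T \<in> set_pmf (if u \<in> S then map_pmf (\<lambda>w. insert w S) (pmf_of_set (nbrs N (cir N 4) u))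
         else map_pmf (\<lambda>w. S - {w}) (pmf_of_set (nbrs N (cir N 2) u)))"
      unfolding moran_step_def by (auto simp: s0)
    have s4: "set_pmf (pmf_of_set (nbrs N (cir N 4) u)) = nbrs N (cir N 4) u"
      by (rule set_pmf_of_set[OF ne4[OF u]]) simp
    have s2: "set_pmf (pmf_of_set (nbrs N (cir N 2) u)) = nbrs N (cir N 2) u"
      by (rule set_pmf_of_set[OF ne2[OF u]]) simp
    show "T \<in> Pow {..<N}"
      using Tu S sub[of "cir N 4" u] sub[of "cir N 2" u] by (auto simp: s4 s2 split: if_splits)
  qed
qed

lemma finite_stp:
  assumes N: "N \<ge> 5" and S: "S \<subseteq> {..<N}"
  shows "finite (set_pmf (stp N S))"
proof -
  have "finite (Pow {..<N})" by simp
  then show ?thesis using set_stp[OF N S] finite_subset by blast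
qed

lemma dst_Suc: "dst N S0 (Suc n) = bind_pmf (dst N S0 n) (stp N)"
  unfolding moran_dist_def by simp

lemma dst_0: "dst N S0 0 = return_pmf S0"
  unfolding moran_dist_def by simp

lemma set_dst:
  assumes N: "N \<ge> 5" and S0: "S0 \<subseteq> {..<N}"
  shows "set_pmf (dst N S0 n) \<subseteq> Pow {..<N}"
proof (induction n)
  case 0 then show ?case using S0 by (simp add: dst_0)
next
  case (Suc n) then show ?case using set_stp[OF N] by (auto simp: dst_Suc)
qed

definition En :: "nat \<Rightarrow> nat set \<Rightarrow> nat \<Rightarrow> (nat set \<Rightarrow> real) \<Rightarrow> real" where
  "En N S0 n f = (\<Sum>S\<in>Pow {..<N}. pmf (dst N S0 n) S * f S)"

lemma En_0: "S0 \<subseteq> {..<N} \<Longrightarrow> En N S0 0 f = f S0"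
  unfolding En_def dst_0 by (simp add: indicator_def if_distrib sum.delta cong: if_cong)

lemma En_Suc:
  assumes N: "N \<ge> 5" and S0: "S0 \<subseteq> {..<N}"
  shows "En N S0 (Suc n) f = (\<Sum>S\<in>Pow {..<N}. pmf (dst N S0 n) S * measure_pmf.expectation (stp N S) f)"
proof -
  have "En N S0 (Suc n) f = measure_pmf.expectation (dst N S0 (Suc n)) f"
    unfolding En_def using set_dst[OF N S0, of "Suc n"]
    by (subst integral_measure_pmf_real[of "Pow {..<N}"]) (auto simp: mult.commute)
  also have "\<dots> = (\<Sum>S\<in>Pow {..<N}. pmf (dst N S0 n) S *\<^sub>R measure_pmf.expectation (stp N S) f)"
    unfolding dst_Suc
    by (rule pmf_expectation_bind) (use set_dst[OF N S0, of n] finite_stp[OF N] in auto)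
  finally show ?thesis by simp
qed

lemma En_mono_drift:
  assumes N: "N \<ge> 5" and S0: "S0 \<subseteq> {..<N}"
    and D: "\<And>S. S \<subseteq> {..<N} \<Longrightarrow> measure_pmf.expectation (stp N S) f \<ge> f S + c S"
  shows "En N S0 (Suc n) f \<ge> En N S0 n f + En N S0 n c"
proof -
  have "En N S0 n f + En N S0 n c = (\<Sum>S\<in>Pow {..<N}. pmf (dst N S0 n) S * (f S + c S))"
    unfolding En_def by (simp add: sum.distrib distrib_left)
  also have "\<dots> \<le> (\<Sum>S\<in>Pow {..<N}. pmf (dst N S0 n) S * measure_pmf.expectation (stp N S) f)"
    by (intro sum_mono mult_left_mono D) auto
  finally show ?thesis using En_Suc[OF N S0] by simp
qed

lemma En_drift_le:
  assumes N: "N \<ge> 5" and S0: "S0 \<subseteq> {..<N}"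
    and D: "\<And>S. S \<subseteq> {..<N} \<Longrightarrow> measure_pmf.expectation (stp N S) f \<le> f S"
  shows "En N S0 (Suc n) f \<le> En N S0 n f"
proof -
  have "En N S0 (Suc n) f = (\<Sum>S\<in>Pow {..<N}. pmf (dst N S0 n) S * measure_pmf.expectation (stp N S) f)"
    by (rule En_Suc[OF N S0])
  also have "\<dots> \<le> En N S0 n f"
    unfolding En_def by (intro sum_mono mult_left_mono D) auto
  finally show ?thesis .
qed

lemma En_mono: "(\<And>S. S \<subseteq> {..<N} \<Longrightarrow> f S \<le> g S) \<Longrightarrow> En N S0 n f \<le> En N S0 n g"
  unfolding En_def by (intro sum_mono mult_left_mono) auto

lemma En_const:
  assumes N: "N \<ge> 5" and S0: "S0 \<subseteq> {..<N}"
  shows "En N S0 n (\<lambda>S. c) = c"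
  unfolding En_def using sum_pmf_eq_1[OF _ set_dst[OF N S0, of n]]
  by (simp add: sum_distrib_right[symmetric])

lemma En_diff: "En N S0 n (\<lambda>S. f S - g S) = En N S0 n f - En N S0 n g"
  unfolding En_def by (simp add: sum_subtractf right_diff_distrib)

lemma En_add: "En N S0 n (\<lambda>S. f S + g S) = En N S0 n f + En N S0 n g"
  unfolding En_def by (simp add: sum.distrib distrib_left)

lemma En_full:
  assumes "N \<ge> 5"
  shows "En N S0 n (\<lambda>S. of_bool (S = {..<N})) = pmf (dst N S0 n) {..<N}"
  unfolding En_def by (simp add: of_bool_def if_distrib sum.delta cong: if_cong)


lemma En_scale: "En N S0 n (\<lambda>S. c * f S) = c * En N S0 n f"
  unfolding En_def by (simp add: sum_distrib_left algebra_simps)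

lemma exp_PF:
  assumes N: "N \<ge> 5" and wpos: "\<And>a b c. w a b c > 0"
  shows "measure_pmf.expectation (stp N S) (\<lambda>T. k - PF w N T) = (k - PF w N S) - PF w N S *
     (\<Sum>j<N. tau w (xb N S (int j - 2)) (xb N S (int j - 1)) (xb N S (int j)) (xb N S (int j + 1)) (xb N S (int j + 2))) / real N"
    (is "?l = _ - _ * ?s / _")
proof -
  have "?l = (k - PF w N S) + (\<Sum>j<N. rate N S j * ((k - PF w N (flip S j)) - (k - PF w N S))) / real N"
    by (rule step_exp[OF N])
  also have "(\<Sum>j<N. rate N S j * ((k - PF w N (flip S j)) - (k - PF w N S)))
      = - (\<Sum>j<N. rate N S j * (PF w N (flip S j) - PF w N S))"
    by (simp add: sum_negf[symmetric] algebra_simps)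
  also have "\<dots> = - (PF w N S * ?s)" by (simp only: PF_drift[OF N wpos])
  finally show ?thesis by simp
qed

lemma PF_nonneg: "(\<And>a b c. w a b c > 0) \<Longrightarrow> PF w N S \<ge> 0"
  unfolding PF_def by (intro prod_nonneg) (simp add: less_imp_le)

lemma PF_le1: "(\<And>a b c. w a b c > 0) \<Longrightarrow> (\<And>a b c. w a b c \<le> 1) \<Longrightarrow> PF w N S \<le> 1"
  unfolding PF_def by (intro prod_le_1) (simp add: less_imp_le)

lemma PF_ge1: "(\<And>a b c. w a b c \<ge> 1) \<Longrightarrow> PF w N S \<ge> 1"
  unfolding PF_def by (intro prod_ge_1) simp

lemma PF_le_pow: "(\<And>a b c. w a b c > 0) \<Longrightarrow> (\<And>a b c. w a b c \<le> B) \<Longrightarrow> PF w N S \<le> B ^ N"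
proof -
  assume p: "\<And>a b c. w a b c > 0" and b: "\<And>a b c. w a b c \<le> B"
  have "PF w N S \<le> (\<Prod>i<N. B)" unfolding PF_def
    by (intro prod_mono conjI) (simp_all add: less_imp_le[OF p] b)
  then show ?thesis by simp
qed

lemma PF_empty: "w False False False = 1 \<Longrightarrow> PF w N {} = 1"
  unfolding PF_def xb_def by simp

lemma PF_full: "N > 0 \<Longrightarrow> PF w N {..<N} = w True True True ^ N"
  unfolding PF_def xb_def using pos_lt[of N] by simp

lemma PF_single:
  assumes N: "N \<ge> 5" and v: "v < N" and wpos: "\<And>a b c. w a b c > 0" and w0: "w False False False = 1"
  shows "PF w N {v} = w False False True * w False True False * w True False False"
proof -
  have "flip {} v = {v}" unfolding flip_def by simp
  then have "PF w N {v} = PF w N {} * R w False False False False False"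
    using PF_flip[OF N v wpos, where S="{}"] by (simp add: xb_def)
  then show ?thesis using w0 by (simp add: PF_empty R_def)
qed

lemma wL_pos: "wL a b c > 0" unfolding wL_def by simp
lemma wU_pos: "wU a b c > 0" unfolding wU_def by simp
lemma wU_le1: "wU a b c \<le> 1" unfolding wU_def by simp
lemma wV_pos: "wV a b c > 0" unfolding wV_def by simp
lemma wV_ge1: "wV a b c \<ge> 1" unfolding wV_def by simp
lemma wV_le3: "wV a b c \<le> 3" unfolding wV_def by simp

lemma sumL: "N > 0 \<Longrightarrow> (\<Sum>j<N. tau wL (xb N S (int j - 2)) (xb N S (int j - 1)) (xb N S (int j)) (xb N S (int j + 1)) (xb N S (int j + 2))) \<le> 0"
  by (rule telescope[where phi = phiL]) (auto intro: checkL)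

lemma sumU: "N > 0 \<Longrightarrow> (\<Sum>j<N. tau wU (xb N S (int j - 2)) (xb N S (int j - 1)) (xb N S (int j)) (xb N S (int j + 1)) (xb N S (int j + 2))) \<ge> 0"
  using telescope[where phi = phiU and Fn = "\<lambda>a b c d e. - tau wU a b c d e", OF _ checkU, of N S]
  by (simp add: sum_negf)

lemma sumV: "N > 0 \<Longrightarrow> (\<Sum>j<N. tau wV (xb N S (int j - 2)) (xb N S (int j - 1)) (xb N S (int j)) (xb N S (int j + 1)) (xb N S (int j + 2)))
   \<ge> (\<Sum>j<N. of_bool (xb N S (int j) \<noteq> xb N S (int j + 1)) / 6)"
  using telescope[where phi = phiV and Fn = "\<lambda>a b c d e. of_bool (c \<noteq> d) / 6 - tau wV a b c d e", OF _ checkV, of N S]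
  by (simp add: sum_subtractf)

lemma nonabs_edge:
  assumes N: "N > 0" and S: "S \<subseteq> {..<N}" "S \<noteq> {}" "S \<noteq> {..<N}"
  shows "\<exists>j<N. xb N S (int j) \<noteq> xb N S (int j + 1)"
proof (rule ccontr)
  assume "\<not> ?thesis"
  then have h: "\<And>j. j < N \<Longrightarrow> xb N S (int (Suc j)) = xb N S (int j)"
    by (metis of_nat_Suc add.commute)
  have all: "k < N \<Longrightarrow> xb N S (int k) = xb N S 0" for k
    by (induction k) (use h in auto)
  have "j \<in> S \<longleftrightarrow> 0 \<in> S" if "j < N" for j
    using all[OF that] xb_nat[OF that, of S] xb_nat[OF N, of S] by simp
  then show False using S N by blast
qed

lemma fix_upper:
  assumes N: "N \<ge> 5" and v: "v < N"
  shows "fixation_prob_from N (cir N 4) (cir N 2) {v} \<le> (3/10) / (1 - (6/10) ^ N)"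
proof -
  define H where "H = PF wU N"
  have N0: "N > 0" using N by simp
  have S0: "{v} \<subseteq> {..<N}" using v by simp
  have pow: "(6/10::real) ^ N < 1" using N by (simp add: power_less_one_iff)
  have drift: "measure_pmf.expectation (stp N S) (\<lambda>T. 1 - H T) \<le> (1 - H S) + 0" for S
    unfolding H_def exp_PF[OF N wU_pos]
    using PF_nonneg[OF wU_pos, where N=N and S=S] sumU[OF N0, where S=S]
    by (simp add: divide_nonneg_pos mult_nonneg_nonneg)
  have En_le: "En N {v} n (\<lambda>T. 1 - H T) \<le> 1 - H {v}" for n
  proof (induction n)
    case 0 then show ?case using En_0[OF S0] by simp
  next
    case (Suc n)
    have "En N {v} (Suc n) (\<lambda>T. 1 - H T) \<le> En N {v} n (\<lambda>T. 1 - H T)"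
      by (rule En_drift_le[OF N S0]) (use drift in simp)
    then show ?case using Suc by simp
  qed
  have Hv: "H {v} = 7/10"
    unfolding H_def by (subst PF_single[OF N v wU_pos]) (simp_all add: wU_def)
  have Hfull: "H {..<N} = (6/10) ^ N"
    unfolding H_def PF_full[OF N0] by (simp add: wU_def)
  have pt: "(1 - (6/10) ^ N) * of_bool (T = {..<N}) \<le> 1 - H T" if "T \<subseteq> {..<N}" for T
    using PF_le1[OF wU_pos wU_le1, where N=N and S=T] Hfull pow unfolding H_def by auto
  have "pmf (dst N {v} n) {..<N} \<le> (3/10) / (1 - (6/10) ^ N)" for n
  proof -
    have "(1 - (6/10) ^ N) * pmf (dst N {v} n) {..<N} = En N {v} n (\<lambda>T. (1 - (6/10) ^ N) * of_bool (T = {..<N}))"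
      by (simp add: En_scale En_full[OF N])
    also have "\<dots> \<le> En N {v} n (\<lambda>T. 1 - H T)" by (rule En_mono) (rule pt)
    also have "\<dots> \<le> 3/10" using En_le[of n] Hv by simp
    finally show ?thesis using pow by (simp add: field_simps)
  qed
  then show ?thesis
    unfolding fixation_prob_from_def moran_dist_def by (intro cSUP_least) auto
qed


lemma exp_PF2:
  assumes N: "N \<ge> 5" and wpos: "\<And>a b c. w a b c > 0"
  shows "measure_pmf.expectation (stp N S) (PF w N) = PF w N S + PF w N S *
     (\<Sum>j<N. tau w (xb N S (int j - 2)) (xb N S (int j - 1)) (xb N S (int j)) (xb N S (int j + 1)) (xb N S (int j + 2))) / real N"
  using step_exp[OF N, of S "PF w N"] PF_drift[OF N wpos, of S] by simp

lemma fix_lower: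
  assumes N: "N \<ge> 5" and v: "v < N"
  shows "fixation_prob_from N (cir N 4) (cir N 2) {v} \<ge> 1 - (92/100) * (93/100)"
proof (rule ccontr)
  define G where "G = PF wL N"
  define V where "V = PF wV N"
  define Fx where "Fx = fixation_prob_from N (cir N 4) (cir N 2) {v}"
  define q where "q n = En N {v} n (\<lambda>S. of_bool (S \<noteq> {} \<and> S \<noteq> {..<N}))" for n
  have N0: "N > 0" using N by simp
  have S0: "{v} \<subseteq> {..<N}" using v by simp
  assume "\<not> Fx \<ge> 1 - (92/100) * (93/100)"
  then have lt: "Fx < 1 - G {v}"
    unfolding G_def by (subst PF_single[OF N v wL_pos]) (simp_all add: wL_def Fx_def)
  define eps where "eps = 1 - G {v} - Fx"
  have eps: "eps > 0" using lt unfolding eps_def by simp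
  have gdrift: "measure_pmf.expectation (stp N S) (\<lambda>T. 1 - G T) \<ge> (1 - G S) + 0" for S
  proof -
    have "PF wL N S * (\<Sum>j<N. tau wL (xb N S (int j - 2)) (xb N S (int j - 1)) (xb N S (int j)) (xb N S (int j + 1)) (xb N S (int j + 2))) \<le> 0"
      by (rule mult_nonneg_nonpos[OF PF_nonneg[of wL N S, OF wL_pos] sumL[OF N0, where S=S]])
    then have "PF wL N S * (\<Sum>j<N. tau wL (xb N S (int j - 2)) (xb N S (int j - 1)) (xb N S (int j)) (xb N S (int j + 1)) (xb N S (int j + 2))) / real N \<le> 0"
      by (simp add: divide_nonpos_nonneg)
    then show ?thesis unfolding G_def exp_PF[OF N wL_pos] by simp
  qed
  have Eng: "En N {v} n (\<lambda>T. 1 - G T) \<ge> 1 - G {v}" for n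
  proof (induction n)
    case 0 then show ?case using En_0[OF S0] by simp
  next
    case (Suc n)
    have "En N {v} (Suc n) (\<lambda>T. 1 - G T) \<ge> En N {v} n (\<lambda>T. 1 - G T) + En N {v} n (\<lambda>T. 0)"
      by (rule En_mono_drift[OF N S0]) (use gdrift in simp)
    then show ?case using Suc En_const[OF N S0, of n 0] by simp
  qed
  have vdrift: "measure_pmf.expectation (stp N S) V \<ge> V S + of_bool (S \<noteq> {} \<and> S \<noteq> {..<N}) / (6 * real N)"
    if S: "S \<subseteq> {..<N}" for S
  proof -
    define s where "s = (\<Sum>j<N. tau wV (xb N S (int j - 2)) (xb N S (int j - 1)) (xb N S (int j)) (xb N S (int j + 1)) (xb N S (int j + 2)))"
    have sb: "s \<ge> (\<Sum>j<N. of_bool (xb N S (int j) \<noteq> xb N S (int j + 1)) / 6)"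
      unfolding s_def by (rule sumV[OF N0])
    have s0: "s \<ge> 0" using sb by (smt (verit) sum_nonneg of_bool_def divide_nonneg_pos)
    have s1: "s \<ge> of_bool (S \<noteq> {} \<and> S \<noteq> {..<N}) / 6"
    proof (cases "S \<noteq> {} \<and> S \<noteq> {..<N}")
      case True
      then obtain j where j: "j < N" "xb N S (int j) \<noteq> xb N S (int j + 1)"
        using nonabs_edge[OF N0 S] by blast
      have "of_bool (xb N S (int j) \<noteq> xb N S (int j + 1)) / 6 \<le> (\<Sum>j<N. of_bool (xb N S (int j) \<noteq> xb N S (int j + 1)) / (6::real))"
        by (rule member_le_sum) (use j in auto)
      then show ?thesis using True j sb by simp
    next
      case False
      then have e: "of_bool (S \<noteq> {} \<and> S \<noteq> {..<N}) = (0::real)" by simp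
      show ?thesis unfolding e using s0 by simp
    qed
    have V1: "V S \<ge> 1" unfolding V_def by (rule PF_ge1) (rule wV_ge1)
    have "V S * s \<ge> s" using V1 s0 by (metis mult_le_cancel_right1 not_le order.strict_trans2 less_eq_real_def mult.commute)
    then have "V S * s / real N \<ge> of_bool (S \<noteq> {} \<and> S \<noteq> {..<N}) / (6 * real N)"
      using s1 N0 by (simp add: divide_simps)
    then show ?thesis
      unfolding V_def exp_PF2[OF N wV_pos] s_def[symmetric] by (simp add: V_def)
  qed
  have EnV: "En N {v} n V \<ge> V {v} + (\<Sum>k<n. q k / (6 * real N))" for n
  proof (induction n)
    case 0 then show ?case using En_0[OF S0] by simp
  next
    case (Suc n)
    have "En N {v} (Suc n) V \<ge> En N {v} n V + En N {v} n (\<lambda>S. of_bool (S \<noteq> {} \<and> S \<noteq> {..<N}) / (6 * real N))"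
      by (rule En_mono_drift[OF N S0]) (rule vdrift)
    moreover have "En N {v} n (\<lambda>S. of_bool (S \<noteq> {} \<and> S \<noteq> {..<N}) / (6 * real N)) = q n / (6 * real N)"
      unfolding q_def using En_scale[of N "{v}" n "1 / (6 * real N)" "\<lambda>S. of_bool (S \<noteq> {} \<and> S \<noteq> {..<N})"]
      by simp
    ultimately show ?case using Suc by simp
  qed
  have Vbound: "En N {v} n V \<le> 3 ^ N" for n
  proof -
    have "En N {v} n V \<le> En N {v} n (\<lambda>S. 3 ^ N)"
      by (rule En_mono) (unfold V_def, rule PF_le_pow[OF wV_pos wV_le3])
    then show ?thesis using En_const[OF N S0] by simp
  qed
  have V0: "V {v} \<ge> 0" unfolding V_def by (rule PF_nonneg[OF wV_pos])
  have pt: "1 - G S \<le> of_bool (S = {..<N}) + of_bool (S \<noteq> {} \<and> S \<noteq> {..<N})" if "S \<subseteq> {..<N}" for S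
  proof (cases "S = {}")
    case True then show ?thesis unfolding G_def by (simp add: PF_empty wL_def)
  next
    case False then show ?thesis using PF_nonneg[of wL N S, OF wL_pos] unfolding G_def by auto
  qed
  have bdd: "bdd_above (range (\<lambda>n. pmf (dst N {v} n) {..<N}))"
    by (rule bdd_aboveI[where M=1]) (auto simp: pmf_le_1)
  have qge: "q n \<ge> eps" for n
  proof -
    have "1 - G {v} \<le> En N {v} n (\<lambda>T. 1 - G T)" by (rule Eng)
    also have "\<dots> \<le> En N {v} n (\<lambda>S. of_bool (S = {..<N}) + of_bool (S \<noteq> {} \<and> S \<noteq> {..<N}))"
      by (rule En_mono) (rule pt)
    also have "\<dots> = pmf (dst N {v} n) {..<N} + q n"
      unfolding En_add En_full[OF N] q_def ..
    also have "pmf (dst N {v} n) {..<N} \<le> Fx"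
      unfolding Fx_def fixation_prob_from_def by (rule cSUP_upper[OF _ bdd]) simp
    finally show ?thesis unfolding eps_def by simp
  qed
  obtain n :: nat where n: "real n > 6 * real N * 3 ^ N / eps" using reals_Archimedean2 by blast
  have "real n * (eps / (6 * real N)) = (\<Sum>k<n. eps / (6 * real N))" by simp
  also have "\<dots> \<le> (\<Sum>k<n. q k / (6 * real N))"
    by (intro sum_mono divide_right_mono qge) (use N0 in simp)
  also have "\<dots> \<le> 3 ^ N" using EnV[of n] Vbound[of n] V0 by simp
  finally have "real n * eps \<le> 6 * real N * 3 ^ N" using N0 by (simp add: field_simps)
  then show False using n eps by (simp add: field_simps)
qed


lemma fp_bounds:
  assumes N: "N \<ge> 10"
  shows "14/100 \<le> fixation_prob N (cir N 4) (cir N 2) \<and> fixation_prob N (cir N 4) (cir N 2) \<le> 31/100"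
proof -
  have N5: "N \<ge> 5" using N by simp
  have p10: "(6/10::real) ^ N \<le> (6/10) ^ 10" by (rule power_decreasing) (use N in auto)
  have "(6/10::real) ^ 10 \<le> 1/100" by (simp add: power_divide)
  then have p: "(6/10::real) ^ N \<le> 1/100" using p10 by linarith
  have pos: "(6/10::real) ^ N \<ge> 0" by simp
  have up: "fixation_prob_from N (cir N 4) (cir N 2) {v} \<le> 31/100" if "v < N" for v
  proof -
    have gen: "(3/10::real) / (1 - x) \<le> 31/100" if "0 \<le> x" "x \<le> 1/100" for x :: real
    proof -
      have "1 - x > 0" using that by simp
      show ?thesis unfolding pos_divide_le_eq[OF \<open>1 - x > 0\<close>] using that by (simp add: right_diff_distrib)
    qed
    have "(3/10::real) / (1 - (6/10) ^ N) \<le> 31/100"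
      by (rule gen[OF pos p])
    then show ?thesis using fix_upper[OF N5 that] by linarith
  qed
  have lo: "14/100 \<le> fixation_prob_from N (cir N 4) (cir N 2) {v}" if "v < N" for v
    using fix_lower[OF N5 that] by simp
  have s1: "(\<Sum>v<N. fixation_prob_from N (cir N 4) (cir N 2) {v}) \<le> real N * (31/100)"
    using sum_bounded_above[of "{..<N}" "\<lambda>v. fixation_prob_from N (cir N 4) (cir N 2) {v}" "31/100"] up by simp
  have s2: "real N * (14/100) \<le> (\<Sum>v<N. fixation_prob_from N (cir N 4) (cir N 2) {v})"
    using sum_bounded_below[of "{..<N}" "14/100" "\<lambda>v. fixation_prob_from N (cir N 4) (cir N 2) {v}"] lo by simp
  have Np: "real N > 0" using N by simp
  show ?thesis unfolding fixation_prob_def using s1 s2 Np by (simp add: divide_simps mult.commute)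
qed

theorem theorem3:
  shows "ereal 0.138 < liminf (\<lambda>N. ereal (fixation_prob N (cir N 4) (cir N 2)))
      \<and> liminf (\<lambda>N. ereal (fixation_prob N (cir N 4) (cir N 2)))
          \<le> limsup (\<lambda>N. ereal (fixation_prob N (cir N 4) (cir N 2)))
      \<and> limsup (\<lambda>N. ereal (fixation_prob N (cir N 4) (cir N 2))) < ereal 0.34"
proof (intro conjI)
  have ev1: "eventually (\<lambda>N. ereal (14/100) \<le> ereal (fixation_prob N (cir N 4) (cir N 2))) sequentially"
    unfolding eventually_sequentially using fp_bounds by auto
  have ev2: "eventually (\<lambda>N. ereal (fixation_prob N (cir N 4) (cir N 2)) \<le> ereal (31/100)) sequentially"
    unfolding eventually_sequentially using fp_bounds by auto
  have "ereal 0.138 < ereal (14/100)" by simp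
  also have "\<dots> \<le> liminf (\<lambda>N. ereal (fixation_prob N (cir N 4) (cir N 2)))"
    by (rule Liminf_bounded[OF ev1])
  finally show "ereal 0.138 < liminf (\<lambda>N. ereal (fixation_prob N (cir N 4) (cir N 2)))" .
  show "liminf (\<lambda>N. ereal (fixation_prob N (cir N 4) (cir N 2)))
          \<le> limsup (\<lambda>N. ereal (fixation_prob N (cir N 4) (cir N 2)))"
    by (rule Liminf_le_Limsup) simp
  have "limsup (\<lambda>N. ereal (fixation_prob N (cir N 4) (cir N 2))) \<le> ereal (31/100)"
    by (rule Limsup_bounded[OF ev2])
  also have "\<dots> < ereal 0.34" by simp
  finally show "limsup (\<lambda>N. ereal (fixation_prob N (cir N 4) (cir N 2))) < ereal 0.34" .
qed

end
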